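(* Let $f(z)=z+\sum_{n=2}^\infty a_nz^n$ belong to the class $\mathcal{S}_G^{\ast}$, and let $\beta_n$ be its logarithmic coefficients. Then $$|\beta_n|\le\frac{1}{4n}\quad(n=1,2,3,4),$$ and these bounds are sharp.
   Context: Let $\mathcal{U}=\{z\in\mathbb{C}:|z|<1\}$. Let $\mathcal{S}$ denote the class of functions $f$ analytic and univalent in $\mathcal{U}$ normalized by $f(0)=0$, $f'(0)=1$. For analytic $g,h$ on $\mathcal{U}$, $g\prec h$ means there is an analytic $w$ on $\mathcal{U}$ with $w(0)=0$, $|w(z)|<1$, and $g(z)=h(w(z))$. Let $\Psi(z)=\frac{z}{\ln(1+z)}$ on $\mathcal{U}$ (principal branch, $\Psi(0)=1$). Define $\mathcal{S}_G^{\ast}=\{f\in\mathcal{S}: zf'(z)/f(z)\prec\Psi(z)\}$. The logarithmic coefficients $\beta_n$ of $f\in\mathcal{S}$ are defined by $\log\frac{f(z)}{z}=2\sum_{n=1}^\infty\beta_nz^n$ for $z\in\mathcal{U}$ (branch with value $0$ at $z=0$). "Sharp" means each bound is attained by some function in $\mathcal{S}_G^{\ast}$. *)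

theory Defs
  imports "HOL-Complex_Analysis.Complex_Analysis"
begin

definition class_S :: "(complex \<Rightarrow> complex) \<Rightarrow> bool" where
  "class_S f \<longleftrightarrow> f holomorphic_on ball 0 1 \<and> inj_on f (ball 0 1) \<and> f 0 = 0 \<and> deriv f 0 = 1"

definition subordinate :: "(complex \<Rightarrow> complex) \<Rightarrow> (complex \<Rightarrow> complex) \<Rightarrow> bool" where
  "subordinate g h \<longleftrightarrow> (\<exists>w. w holomorphic_on ball 0 1 \<and> w 0 = 0 \<and>
       (\<forall>z\<in>ball 0 1. norm (w z) < 1 \<and> g z = h (w z)))"

definition Psi :: "complex \<Rightarrow> complex" where
  "Psi z = (if z = 0 then 1 else z / Ln (1 + z))"

text \<open>z f'(z) / f(z), extended to z = 0 by its limit value 1 (f(0)=0, f'(0)=1).\<close>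
definition starlike_quot :: "(complex \<Rightarrow> complex) \<Rightarrow> complex \<Rightarrow> complex" where
  "starlike_quot f z = (if z = 0 then 1 else z * deriv f z / f z)"

definition SG_star :: "(complex \<Rightarrow> complex) set" where
  "SG_star = {f. class_S f \<and> subordinate (starlike_quot f) Psi}"

text \<open>Logarithmic coefficients: log(f(z)/z) = 2 * sum beta_n z^n, where log(f(z)/z) is
  the analytic branch L on U with L(0)=0; beta_n is half the n-th Taylor coefficient of L.\<close>
definition log_coeff :: "(complex \<Rightarrow> complex) \<Rightarrow> nat \<Rightarrow> complex" where
  "log_coeff f n = (THE b. \<exists>L. L holomorphic_on ball 0 1 \<and> L 0 = 0 \<and>
      (\<forall>z\<in>ball 0 1 - {0}. exp (L z) = f z / z) \<and>
      b = (deriv ^^ n) L 0 / (2 * fact n))"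

end

theory Submission
  imports Defs
begin

lemma Ln1_fps: "(\<lambda>z. Ln (1+z)) has_fps_expansion fps_ln 1"
proof -
  have "\<forall>z\<in>ball 0 1. eval_fps (fps_ln 1) z = Ln (1+z)"
  proof
    fix z :: complex assume z: "z \<in> ball 0 1"
    have "(\<lambda>n. fps_ln 1 $ n * z ^ n) sums Ln (1+z)"
    proof -
      have "(\<lambda>n. - ((-z)^n) / of_nat n) sums Ln (1+z)" using z by (intro Ln_series') auto
      moreover have "(\<lambda>n. - ((-z)^n) / of_nat n) = (\<lambda>n. fps_ln 1 $ n * z ^ n)"
      proof
        fix n show "- ((-z)^n) / of_nat n = fps_ln 1 $ n * z ^ n"
          by (cases n) (auto simp: fps_ln_nth power_minus' field_simps)
      qed
      ultimately show ?thesis by simp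
    qed
    then show "eval_fps (fps_ln 1) z = Ln (1+z)" unfolding eval_fps_def by (simp add: sums_iff)
  qed
  then have "eventually (\<lambda>z. eval_fps (fps_ln 1) z = Ln (1+z)) (nhds 0)"
    using eventually_nhds_in_open[of "ball 0 1" 0] by (auto elim: eventually_mono)
  then show ?thesis unfolding has_fps_expansion_def by simp
qed

definition Gl :: "complex \<Rightarrow> complex" where
  "Gl z = (if z = 0 then 1 else Ln (1+z) / z)"

lemma Gl_fps: "Gl has_fps_expansion fps_shift 1 (fps_ln 1)"
proof -
  have sd: "1 \<le> subdegree (fps_ln (1::complex))"
    by (rule subdegree_geI) (auto simp: fps_ln_nth fps_eq_iff)
  have "(\<lambda>x. if x = 0 then fps_ln 1 $ 1 else Ln (1+x) / x ^ 1) has_fps_expansion fps_shift 1 (fps_ln 1)"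
    by (rule has_fps_expansion_shift[OF Ln1_fps sd]) simp
  moreover have "(\<lambda>x. if x = 0 then fps_ln 1 $ 1 else Ln (1+x) / x ^ 1) = Gl"
    by (auto simp: Gl_def fps_ln_nth fun_eq_iff)
  ultimately show ?thesis by simp
qed

definition PS :: "complex fps" where "PS = inverse (fps_shift 1 (fps_ln 1))"

lemma Psi_eq: "Psi = (\<lambda>z. inverse (Gl z))"
  by (auto simp: fun_eq_iff Psi_def Gl_def)

lemma Psi_fps: "Psi has_fps_expansion PS"
  unfolding Psi_eq PS_def
  by (rule has_fps_expansion_inverse[OF Gl_fps]) (simp add: fps_ln_nth)

lemma PS_coeffs: "PS $ 0 = 1" "PS $ 1 = 1/2" "PS $ 2 = -1/12" "PS $ 3 = 1/24" "PS $ 4 = -19/720"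
proof -
  define G where "G = fps_shift 1 (fps_ln (1::complex))"
  have G0: "G $ 0 \<noteq> 0" by (simp add: G_def fps_ln_nth)
  have e: "PS * G = 1" unfolding PS_def G_def[symmetric] by (rule inverse_mult_eq_1[OF G0])
  have Gn: "G $ n = (-1)^n / of_nat (n+1)" for n by (simp add: G_def fps_ln_nth)
  have c: "(PS * G) $ n = (if n = 0 then 1 else 0)" for n using e by simp
  have c0: "PS $ 0 = 1" using c[of 0] by (simp add: Gn)
  have c1: "PS $ 1 = 1/2" using c[of 1] c0 by (simp add: Gn fps_mult_nth numeral_eq_Suc) 
  have c2: "PS $ 2 = -1/12" using c[of 2] c0 c1 by (simp add: Gn fps_mult_nth numeral_eq_Suc) algebra
  have c3: "PS $ 3 = 1/24" using c[of 3] c0 c1 c2 by (simp add: Gn fps_mult_nth numeral_eq_Suc) algebra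
  have c4: "PS $ 4 = -19/720" using c[of 4] c0 c1 c2 c3 by (simp add: Gn fps_mult_nth numeral_eq_Suc) algebra
  show "PS $ 0 = 1" "PS $ 1 = 1/2" "PS $ 2 = -1/12" "PS $ 3 = 1/24" "PS $ 4 = -19/720"
    using c0 c1 c2 c3 c4 by auto
qed


lemma NW_re_pos:
  fixes F F' :: "complex \<Rightarrow> complex"
  assumes S: "convex S" "open S" and der: "\<And>z. z \<in> S \<Longrightarrow> (F has_field_derivative F' z) (at z)"
    and pos: "\<And>z. z \<in> S \<Longrightarrow> Re (F' z) > 0" and ab: "a \<in> S" "b \<in> S" "a \<noteq> b"
  shows "Re ((F b - F a) / (b - a)) > 0"
proof -
  define g where "g t = Re (F (a + of_real t * (b - a)) / (b - a))" for t
  have "g 0 < g 1"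
  proof (rule DERIV_pos_imp_increasing[of 0 1 g])
    fix t :: real assume t: "0 \<le> t" "t \<le> 1"
    have "(1 - t) *\<^sub>R a + t *\<^sub>R b \<in> S" using convexD_alt[OF S(1) ab(1,2) t] .
    moreover have "(1 - t) *\<^sub>R a + t *\<^sub>R b = a + of_real t * (b - a)"
      by (simp add: scaleR_conv_of_real algebra_simps)
    ultimately have p: "a + of_real t * (b - a) \<in> S" by simp
    have v: "((\<lambda>t. a + of_real t * (b - a)) has_vector_derivative (b - a)) (at t)"
      by (auto intro!: derivative_eq_intros simp: has_vector_derivative_def scaleR_conv_of_real)
    have d2: "((\<lambda>u. F u / (b - a)) has_field_derivative F' (a + of_real t * (b - a)) / (b - a)) (at (a + of_real t * (b - a)))"
      by (intro DERIV_cdivide der p)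
    have "((\<lambda>t. F (a + of_real t * (b - a)) / (b - a)) has_vector_derivative
            ((b - a) * (F' (a + of_real t * (b - a)) / (b - a)))) (at t)"
      using field_vector_diff_chain_at[OF v d2] by (simp add: o_def)
    moreover have "(b - a) * (F' (a + of_real t * (b - a)) / (b - a)) = F' (a + of_real t * (b - a))"
      using ab by simp
    ultimately have "((\<lambda>t. F (a + of_real t * (b - a)) / (b - a)) has_vector_derivative
            F' (a + of_real t * (b - a))) (at t)" by simp
    then have "(g has_real_derivative Re (F' (a + of_real t * (b - a)))) (at t)"
      unfolding g_def by (rule has_field_derivative_Re)
    then show "\<exists>y. (g has_real_derivative y) (at t) \<and> 0 < y" using pos[OF p] by blast
  qed simp
  moreover have "g 1 - g 0 = Re ((F b - F a) / (b - a))"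
    by (simp add: g_def diff_divide_distrib)
  ultimately show ?thesis by simp
qed

lemma Ln1_holo: "(\<lambda>z. Ln (1 + z)) holomorphic_on ball 0 1"
proof -
  have "1 + z \<notin> \<real>\<^sub>\<le>\<^sub>0" if "z \<in> ball 0 1" for z :: complex
  proof -
    have "\<bar>Re z\<bar> < 1" using that abs_Re_le_cmod[of z] by auto
    then have "Re (1 + z) > 0" by simp
    then show ?thesis by (auto simp: complex_nonpos_Reals_iff)
  qed
  then show ?thesis by (auto intro!: holomorphic_intros)
qed

lemma Ln1_deriv: "z \<in> ball 0 1 \<Longrightarrow> ((\<lambda>z. Ln (1 + z)) has_field_derivative inverse (1 + z)) (at z)"
proof -
  assume "z \<in> ball 0 1"
  then have "\<bar>Re z\<bar> < 1" using abs_Re_le_cmod[of z] by auto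
  then have "1 + z \<notin> \<real>\<^sub>\<le>\<^sub>0" by (auto simp: complex_nonpos_Reals_iff)
  then show ?thesis by (auto intro!: derivative_eq_intros)
qed

lemma Re_inverse_pos: "Re w > 0 \<Longrightarrow> Re (inverse w) > 0"
  by (simp add: Re_inverse, intro divide_pos_pos, auto intro: add_pos_nonneg)
  
lemma Re_Gl_pos: "z \<in> ball 0 1 \<Longrightarrow> Re (Gl z) > 0"
proof (cases "z = 0")
  case True then show ?thesis by (simp add: Gl_def)
next
  case False
  assume z: "z \<in> ball 0 1"
  have "Re ((Ln (1 + z) - Ln (1 + 0)) / (z - 0)) > 0"
  proof (rule NW_re_pos[of "ball 0 1" _ "\<lambda>z. inverse (1 + z)"])
    fix u :: complex assume u: "u \<in> ball 0 1"
    then have "\<bar>Re u\<bar> < 1" using abs_Re_le_cmod[of u] by auto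
    then show "Re (inverse (1 + u)) > 0" by (intro Re_inverse_pos) simp
  qed (use z False Ln1_deriv in auto)
  then show ?thesis using False by (simp add: Gl_def)
qed

lemma Gl_holo: "Gl holomorphic_on ball 0 1"
proof -
  have "(\<lambda>z. if z = 0 then deriv (\<lambda>z. Ln (1 + z)) 0 else (Ln (1 + z) - Ln (1 + 0)) / (z - 0)) holomorphic_on ball 0 1"
    by (rule pole_lemma[OF Ln1_holo]) auto
  moreover have "deriv (\<lambda>z. Ln (1 + z)) 0 = 1"
    using Ln1_deriv[of 0] by (auto intro!: DERIV_imp_deriv)
  moreover have "Gl = (\<lambda>z. if z = 0 then deriv (\<lambda>z. Ln (1 + z)) 0 else (Ln (1 + z) - Ln (1 + 0)) / (z - 0))"
    using calculation(2) by (auto simp: Gl_def fun_eq_iff)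
  ultimately show ?thesis by simp
qed

lemma Gl_nz: "z \<in> ball 0 1 \<Longrightarrow> Gl z \<noteq> 0"
  using Re_Gl_pos[of z] by auto

lemma Psi_holo: "Psi holomorphic_on ball 0 1"
  unfolding Psi_eq using Gl_holo Gl_nz by (auto intro!: holomorphic_intros)

lemma Re_Psi_pos: "z \<in> ball 0 1 \<Longrightarrow> Re (Psi z) > 0"
  unfolding Psi_eq using Re_Gl_pos by (intro Re_inverse_pos) auto


lemma fps_expansion_unique:
  fixes f :: "complex \<Rightarrow> complex"
  assumes "f has_fps_expansion F" "f has_fps_expansion G" shows "F = G"
  using fps_nth_fps_expansion[OF assms(1)] fps_nth_fps_expansion[OF assms(2)] by (auto intro: fps_ext)

lemma log_unique:
  assumes L1: "L1 holomorphic_on ball 0 1" "L1 0 = 0" "\<forall>z\<in>ball 0 1 - {0}. exp (L1 z) = f z / z"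
      and L2: "L2 holomorphic_on ball 0 1" "L2 0 = 0" "\<forall>z\<in>ball 0 1 - {0}. exp (L2 z) = f z / z"
  shows "\<forall>z\<in>ball 0 1. L2 z = L1 z"
proof -
  define D where "D z = L2 z - L1 z" for z
  have Dh: "D holomorphic_on ball 0 1" unfolding D_def[abs_def] using L1 L2 by (auto intro!: holomorphic_intros)
  have e1: "exp (D z) = 1" if "z \<in> ball 0 1" for z
  proof (cases "z = 0")
    case True then show ?thesis using L1 L2 by (simp add: D_def)
  next
    case False
    then have "exp (L2 z) = exp (L1 z)" using that L1 L2 by auto
    then show ?thesis by (simp add: D_def exp_diff)
  qed
  have "(D has_field_derivative 0) (at z within ball 0 1)" if z: "z \<in> ball 0 1" for z
  proof -
    have dD: "(D has_field_derivative deriv D z) (at z)"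
      using Dh z by (auto intro!: holomorphic_derivI)
    have "((\<lambda>z. exp (D z)) has_field_derivative exp (D z) * deriv D z) (at z)"
      using DERIV_chain2[OF DERIV_exp dD] by simp
    moreover have "((\<lambda>z. exp (D z)) has_field_derivative 0) (at z)"
      by (rule has_field_derivative_transform_within_open[of "\<lambda>_. 1" 0 z "ball 0 1"])
         (use z e1 in auto)
    ultimately have "exp (D z) * deriv D z = 0" using DERIV_unique by blast
    then have "deriv D z = 0" by simp
    then show ?thesis using dD by (auto intro: has_field_derivative_at_within)
  qed
  then obtain c where "\<forall>z\<in>ball 0 1. D z = c"
    using has_field_derivative_zero_constant[of "ball 0 1" D] by auto
  moreover have "D 0 = 0" using L1 L2 by (simp add: D_def)
  ultimately show ?thesis by (auto simp: D_def)
qed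

lemma log_coeff_eq:
  assumes L: "L holomorphic_on ball 0 1" "L 0 = 0" "\<forall>z\<in>ball 0 1 - {0}. exp (L z) = f z / z"
  shows "log_coeff f n = (deriv ^^ n) L 0 / (2 * fact n)"
  unfolding log_coeff_def
proof (rule the_equality)
  show "\<exists>L'. L' holomorphic_on ball 0 1 \<and> L' 0 = 0 \<and> (\<forall>z\<in>ball 0 1 - {0}. exp (L' z) = f z / z) \<and>
      (deriv ^^ n) L 0 / (2 * fact n) = (deriv ^^ n) L' 0 / (2 * fact n)"
    using L by blast
next
  fix b assume "\<exists>L'. L' holomorphic_on ball 0 1 \<and> L' 0 = 0 \<and> (\<forall>z\<in>ball 0 1 - {0}. exp (L' z) = f z / z) \<and>
      b = (deriv ^^ n) L' 0 / (2 * fact n)"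
  then obtain L' where L': "L' holomorphic_on ball 0 1" "L' 0 = 0" "\<forall>z\<in>ball 0 1 - {0}. exp (L' z) = f z / z"
     and b: "b = (deriv ^^ n) L' 0 / (2 * fact n)" by blast
  have eq: "\<forall>z\<in>ball 0 1. L' z = L z" by (rule log_unique[OF L L'])
  have "eventually (\<lambda>z. L' z = L z) (nhds 0)"
    using eventually_nhds_in_open[of "ball 0 1" 0] eq by (auto elim: eventually_mono)
  then have "(deriv ^^ n) L' 0 = (deriv ^^ n) L 0" by (rule higher_deriv_cong_ev) simp
  then show "b = (deriv ^^ n) L 0 / (2 * fact n)" using b by simp
qed

lemma log_exists:
  assumes "class_S f"
  obtains L where "L holomorphic_on ball 0 1" "L 0 = 0" "\<And>z. z \<in> ball 0 1 \<Longrightarrow> f z = z * exp (L z)"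
proof -
  have fh: "f holomorphic_on ball 0 1" and inj: "inj_on f (ball 0 1)" and f0: "f 0 = 0" and d0: "deriv f 0 = 1"
    using assms by (auto simp: class_S_def)
  define Fq where "Fq = (\<lambda>z. if z = 0 then deriv f 0 else (f z - f 0) / (z - 0))"
  have Fqh: "Fq holomorphic_on ball 0 1" unfolding Fq_def by (rule pole_lemma[OF fh]) auto
  have Fqnz: "Fq z \<noteq> 0" if "z \<in> ball 0 1" for z
  proof (cases "z = 0")
    case True then show ?thesis using d0 by (simp add: Fq_def)
  next
    case False
    have "f z \<noteq> f 0" using inj_onD[OF inj, of z 0] that False by auto
    then show ?thesis using False f0 by (simp add: Fq_def)
  qed
  obtain g where gh: "g holomorphic_on ball 0 1" and ge: "\<And>z. z \<in> ball 0 1 \<Longrightarrow> Fq z = exp (g z)"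
    using contractible_imp_holomorphic_log[OF Fqh convex_imp_contractible[OF convex_ball] Fqnz] by blast
  define L where "L z = g z - g 0" for z
  have "L holomorphic_on ball 0 1" unfolding L_def[abs_def] using gh by (auto intro!: holomorphic_intros)
  moreover have "L 0 = 0" by (simp add: L_def)
  moreover have "f z = z * exp (L z)" if z: "z \<in> ball 0 1" for z
  proof -
    have "exp (g 0) = 1" using ge[of 0] d0 by (simp add: Fq_def)
    then have "exp (L z) = Fq z" using ge[OF z] by (simp add: L_def exp_diff)
    then show ?thesis using f0 by (cases "z = 0") (auto simp: Fq_def)
  qed
  ultimately show ?thesis using that by blast
qed

lemma starlike_quot_eq:
  assumes L: "L holomorphic_on ball 0 1" and fe: "\<And>z. z \<in> ball 0 1 \<Longrightarrow> f z = z * exp (L z)"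
    and z: "z \<in> ball 0 1"
  shows "starlike_quot f z = 1 + z * deriv L z"
proof (cases "z = 0")
  case True then show ?thesis by (simp add: starlike_quot_def)
next
  case False
  have dL: "(L has_field_derivative deriv L z) (at z)" using L z by (auto intro!: holomorphic_derivI)
  have "((\<lambda>z. z * exp (L z)) has_field_derivative (1 * exp (L z) + z * (exp (L z) * deriv L z))) (at z)"
    using DERIV_mult[OF DERIV_ident DERIV_chain2[OF DERIV_exp dL]] by (simp add: algebra_simps)
  then have "(f has_field_derivative (1 * exp (L z) + z * (exp (L z) * deriv L z))) (at z)"
    by (rule has_field_derivative_transform_within_open[of _ _ _ "ball 0 1"]) (use z fe in auto)
  then have "deriv f z = exp (L z) + z * (exp (L z) * deriv L z)" by (simp add: DERIV_imp_deriv)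
  then show ?thesis using False fe[OF z] by (simp add: starlike_quot_def field_simps)
qed

lemma quot_fps:
  assumes L: "L holomorphic_on ball 0 1" and fe: "\<And>z. z \<in> ball 0 1 \<Longrightarrow> f z = z * exp (L z)"
  shows "starlike_quot f has_fps_expansion 1 + fps_X * fps_deriv (fps_expansion L 0)"
proof -
  have LL: "L has_fps_expansion fps_expansion L 0" using L by (intro has_fps_expansion_fps_expansion[of "ball 0 1"]) auto
  have "(\<lambda>z. 1 + z * deriv L z) has_fps_expansion 1 + fps_X * fps_deriv (fps_expansion L 0)"
    by (intro fps_expansion_intros LL)
  moreover have "eventually (\<lambda>z. (\<lambda>z. 1 + z * deriv L z) z = starlike_quot f z) (nhds 0)"
    using eventually_nhds_in_open[of "ball 0 1" 0] starlike_quot_eq[OF L fe]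
    by (auto elim: eventually_mono)
  ultimately show ?thesis using has_fps_expansion_cong[of "\<lambda>z. 1 + z * deriv L z" "starlike_quot f"] by blast
qed

lemma log_coeff_fps:
  assumes L: "L holomorphic_on ball 0 1" "L 0 = 0" and fe: "\<And>z. z \<in> ball 0 1 \<Longrightarrow> f z = z * exp (L z)"
    and Q: "starlike_quot f has_fps_expansion Q" and n: "n \<ge> 1"
  shows "log_coeff f n = Q $ n / (2 * of_nat n)"
proof -
  have "\<forall>z\<in>ball 0 1 - {0}. exp (L z) = f z / z" using fe by auto
  then have lc: "log_coeff f n = (deriv ^^ n) L 0 / (2 * fact n)" by (rule log_coeff_eq[OF L(1,2)])
  have LL: "L has_fps_expansion fps_expansion L 0" using L by (intro has_fps_expansion_fps_expansion[of "ball 0 1"]) auto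
  have "Q = 1 + fps_X * fps_deriv (fps_expansion L 0)"
    by (rule fps_expansion_unique[OF Q quot_fps[OF L(1) fe]])
  then have "Q $ n = of_nat n * fps_expansion L 0 $ n" using n by (cases n) auto
  moreover have "fps_expansion L 0 $ n = (deriv ^^ n) L 0 / fact n" by (rule fps_nth_fps_expansion[OF LL])
  ultimately have "Q $ n = of_nat n * (deriv ^^ n) L 0 / fact n" by simp
  also have "(deriv ^^ n) L 0 = 2 * fact n * log_coeff f n" using lc by simp
  finally have "Q $ n = 2 * of_nat n * log_coeff f n" by simp
  then show ?thesis using n by (simp add: field_simps)
qed

definition TA :: "real \<Rightarrow> real \<Rightarrow> real" where
  "TA y b = (1-y)*((1-b^2) + (1+b)*y*(2*b+1/3)^2/4) + (1-y)^2*b^2/6 + (1-y)*y*(b^3+b^2/3+b/4) + 19*y^2/360"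
definition TB :: "real \<Rightarrow> real \<Rightarrow> real" where
  "TB a b = (1-a^2)*(1-b^2)*(1 + a*(2*b+1/3)) + (1-a^2)^2*b^2/6 + (1-a^2)*a^2*(b^3+b^2/3+b/4) + 19*a^4/360"

lemma TA_box0:
  fixes u v :: real assumes "0 \<le> u" "u \<le> 1" "0 \<le> v" "v \<le> 1"
  shows "TA ((0) + (1) * u) ((0) + (1/2) * v) \<le> 1"
proof -
  have "1 - TA ((0) + (1) * u) ((0) + (1/2) * v) = (5/24)*(1-u)^2* v^2*(1-v)^1 + (5/24)*(1-u)^2* v^3 + (35/36)* u^1*(1-u)^1*(1-v)^3 + (47/18)* u^1*(1-u)^1* v^1*(1-v)^2 + (77/36)* u^1*(1-u)^1* v^2*(1-v)^1 + (1/4)* u^1*(1-u)^1* v^3 + (341/360)* u^2*(1-v)^3 + (341/120)* u^2* v^1*(1-v)^2 + (341/120)* u^2* v^2*(1-v)^1 + (341/360)* u^2* v^3"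
    unfolding TA_def by (simp add: field_simps power2_eq_square power3_eq_cube power4_eq_xxxx)
  moreover have "0 \<le> (5/24)*(1-u)^2* v^2*(1-v)^1 + (5/24)*(1-u)^2* v^3 + (35/36)* u^1*(1-u)^1*(1-v)^3 + (47/18)* u^1*(1-u)^1* v^1*(1-v)^2 + (77/36)* u^1*(1-u)^1* v^2*(1-v)^1 + (1/4)* u^1*(1-u)^1* v^3 + (341/360)* u^2*(1-v)^3 + (341/120)* u^2* v^1*(1-v)^2 + (341/120)* u^2* v^2*(1-v)^1 + (341/360)* u^2* v^3"
    using assms by (intro add_nonneg_nonneg mult_nonneg_nonneg zero_le_power) auto
  ultimately show ?thesis by linarith
qed

lemma TA_box1:
  fixes u v :: real assumes "0 \<le> u" "u \<le> 1" "0 \<le> v" "v \<le> 1"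
  shows "TA ((0) + (1/2) * u) ((1/2) + (3/10) * v) \<le> 1"
proof -
  have "1 - TA ((0) + (1/2) * u) ((1/2) + (3/10) * v) = (5/24)*(1-u)^2*(1-v)^3 + (7/8)*(1-u)^2* v^1*(1-v)^2 + (6/5)*(1-u)^2* v^2*(1-v)^1 + (8/15)*(1-u)^2* v^3 + (1/3)* u^1*(1-u)^1*(1-v)^3 + (5/6)* u^1*(1-u)^1* v^1*(1-v)^2 + (173/300)* u^1*(1-u)^1* v^2*(1-v)^1 + (149/3000)* u^1*(1-u)^1* v^3 + (253/720)* u^2*(1-v)^3 + (109/120)* u^2* v^1*(1-v)^2 + (559/800)* u^2* v^2*(1-v)^1 + (4619/36000)* u^2* v^3"
    unfolding TA_def by (simp add: field_simps power2_eq_square power3_eq_cube power4_eq_xxxx)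
  moreover have "0 \<le> (5/24)*(1-u)^2*(1-v)^3 + (7/8)*(1-u)^2* v^1*(1-v)^2 + (6/5)*(1-u)^2* v^2*(1-v)^1 + (8/15)*(1-u)^2* v^3 + (1/3)* u^1*(1-u)^1*(1-v)^3 + (5/6)* u^1*(1-u)^1* v^1*(1-v)^2 + (173/300)* u^1*(1-u)^1* v^2*(1-v)^1 + (149/3000)* u^1*(1-u)^1* v^3 + (253/720)* u^2*(1-v)^3 + (109/120)* u^2* v^1*(1-v)^2 + (559/800)* u^2* v^2*(1-v)^1 + (4619/36000)* u^2* v^3"
    using assms by (intro add_nonneg_nonneg mult_nonneg_nonneg zero_le_power) auto
  ultimately show ?thesis by linarith
qed

lemma TA_box2:
  fixes u v :: real assumes "0 \<le> u" "u \<le> 1" "0 \<le> v" "v \<le> 1"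
  shows "TA ((1/2) + (1/2) * u) ((1/2) + (3/10) * v) \<le> 1"
proof -
  have "1 - TA ((1/2) + (1/2) * u) ((1/2) + (3/10) * v) = (253/720)*(1-u)^2*(1-v)^3 + (109/120)*(1-u)^2* v^1*(1-v)^2 + (559/800)*(1-u)^2* v^2*(1-v)^1 + (4619/36000)*(1-u)^2* v^3 + (193/180)* u^1*(1-u)^1*(1-v)^3 + (14/5)* u^1*(1-u)^1* v^1*(1-v)^2 + (1331/600)* u^1*(1-u)^1* v^2*(1-v)^1 + (1043/2250)* u^1*(1-u)^1* v^3 + (341/360)* u^2*(1-v)^3 + (341/120)* u^2* v^1*(1-v)^2 + (341/120)* u^2* v^2*(1-v)^1 + (341/360)* u^2* v^3"
    unfolding TA_def by (simp add: field_simps power2_eq_square power3_eq_cube power4_eq_xxxx)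
  moreover have "0 \<le> (253/720)*(1-u)^2*(1-v)^3 + (109/120)*(1-u)^2* v^1*(1-v)^2 + (559/800)*(1-u)^2* v^2*(1-v)^1 + (4619/36000)*(1-u)^2* v^3 + (193/180)* u^1*(1-u)^1*(1-v)^3 + (14/5)* u^1*(1-u)^1* v^1*(1-v)^2 + (1331/600)* u^1*(1-u)^1* v^2*(1-v)^1 + (1043/2250)* u^1*(1-u)^1* v^3 + (341/360)* u^2*(1-v)^3 + (341/120)* u^2* v^1*(1-v)^2 + (341/120)* u^2* v^2*(1-v)^1 + (341/360)* u^2* v^3"
    using assms by (intro add_nonneg_nonneg mult_nonneg_nonneg zero_le_power) auto
  ultimately show ?thesis by linarith
qed

lemma TB_box:
  fixes u v :: real assumes "0 \<le> u" "u \<le> 1" "0 \<le> v" "v \<le> 1"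
  shows "TB u ((4/5) + (1/5) * v) \<le> 1"
proof -
  have "1 - TB u ((4/5) + (1/5) * v) = (8/15)*(1-u)^4*(1-v)^3 + (28/15)*(1-u)^4* v^1*(1-v)^2 + (13/6)*(1-u)^4* v^2*(1-v)^1 + (5/6)*(1-u)^4* v^3 + (539/375)* u^1*(1-u)^3*(1-v)^3 + (439/75)* u^1*(1-u)^3* v^1*(1-v)^2 + (116/15)* u^1*(1-u)^3* v^2*(1-v)^1 + (10/3)* u^1*(1-u)^3* v^3 + (19/25)* u^2*(1-u)^2*(1-v)^3 + (91/20)* u^2*(1-u)^2* v^1*(1-v)^2 + (15/2)* u^2*(1-u)^2* v^2*(1-v)^1 + (15/4)* u^2*(1-u)^2* v^3 + (14/375)* u^3*(1-u)^1*(1-v)^3 + (31/50)* u^3*(1-u)^1* v^1*(1-v)^2 + (7/5)* u^3*(1-u)^1* v^2*(1-v)^1 + (5/6)* u^3*(1-u)^1* v^3 + (341/360)* u^4*(1-v)^3 + (341/120)* u^4* v^1*(1-v)^2 + (341/120)* u^4* v^2*(1-v)^1 + (341/360)* u^4* v^3"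
    unfolding TB_def by (simp add: field_simps power2_eq_square power3_eq_cube power4_eq_xxxx)
  moreover have "0 \<le> (8/15)*(1-u)^4*(1-v)^3 + (28/15)*(1-u)^4* v^1*(1-v)^2 + (13/6)*(1-u)^4* v^2*(1-v)^1 + (5/6)*(1-u)^4* v^3 + (539/375)* u^1*(1-u)^3*(1-v)^3 + (439/75)* u^1*(1-u)^3* v^1*(1-v)^2 + (116/15)* u^1*(1-u)^3* v^2*(1-v)^1 + (10/3)* u^1*(1-u)^3* v^3 + (19/25)* u^2*(1-u)^2*(1-v)^3 + (91/20)* u^2*(1-u)^2* v^1*(1-v)^2 + (15/2)* u^2*(1-u)^2* v^2*(1-v)^1 + (15/4)* u^2*(1-u)^2* v^3 + (14/375)* u^3*(1-u)^1*(1-v)^3 + (31/50)* u^3*(1-u)^1* v^1*(1-v)^2 + (7/5)* u^3*(1-u)^1* v^2*(1-v)^1 + (5/6)* u^3*(1-u)^1* v^3 + (341/360)* u^4*(1-v)^3 + (341/120)* u^4* v^1*(1-v)^2 + (341/120)* u^4* v^2*(1-v)^1 + (341/360)* u^4* v^3"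
    using assms by (intro add_nonneg_nonneg mult_nonneg_nonneg zero_le_power) auto
  ultimately show ?thesis by linarith
qed


lemma TA_le:
  fixes y b :: real assumes "0 \<le> y" "y \<le> 1" "0 \<le> b" "b \<le> 4/5"
  shows "TA y b \<le> 1"
proof -
  consider "b \<le> 1/2" | "b \<ge> 1/2" "y \<le> 1/2" | "b \<ge> 1/2" "y \<ge> 1/2" by linarith
  then show ?thesis
  proof cases
    case 1 then show ?thesis using TA_box0[of y "2*b"] assms by simp
  next
    case 2
    have "TA (0 + 1/2 * (2*y)) (1/2 + 3/10 * ((b - 1/2)*(10/3))) \<le> 1"
      by (rule TA_box1) (use assms 2 in auto)
    moreover have "(0::real) + 1/2 * (2*y) = y" "(1/2::real) + 3/10 * ((b - 1/2)*(10/3)) = b" by (simp_all add: field_simps)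
    ultimately show ?thesis by (simp only:)
  next
    case 3
    have "TA (1/2 + 1/2 * ((y - 1/2)*2)) (1/2 + 3/10 * ((b - 1/2)*(10/3))) \<le> 1"
      by (rule TA_box2) (use assms 3 in auto)
    moreover have "(1/2::real) + 1/2 * ((y - 1/2)*2) = y" "(1/2::real) + 3/10 * ((b - 1/2)*(10/3)) = b" by (simp_all add: field_simps)
    ultimately show ?thesis by (simp only:)
  qed
qed

lemma TB_le:
  fixes a b :: real assumes "0 \<le> a" "a \<le> 1" "4/5 \<le> b" "b \<le> 1"
  shows "TB a b \<le> 1"
proof -
  have "TB a (4/5 + 1/5 * ((b - 4/5)*5)) \<le> 1" by (rule TB_box) (use assms in auto)
  moreover have "(4/5::real) + 1/5 * ((b - 4/5)*5) = b" by (simp add: field_simps)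
  ultimately show ?thesis by (simp only:)
qed


lemma amgm4: fixes t p :: real shows "t * p - t^2 \<le> p^2 / 4"
proof -
  have "0 \<le> (t - p/2)^2" by simp
  then show ?thesis by (simp add: power2_eq_square algebra_simps)
qed

lemma R4_le:
  fixes a b c p :: real
  assumes a: "0 \<le> a" "a \<le> 1" and b: "0 \<le> b" "b \<le> 1" and c: "0 \<le> c" "c \<le> 1"
    and p: "0 \<le> p" "p \<le> 2*a*b + a/3"
  shows "(1-a^2)*((1-b^2)*((1-c^2) + b*c^2 + c*p) + (1-a^2)*b^2/6 + a^2*b^3 + a^2*b^2/3 + a^2*b/4) + 19*a^4/360 \<le> 1"
proof -
  have s1: "0 \<le> 1 - a^2" using a by (simp add: power_le_one)
  have s2: "0 \<le> 1 - b^2" using b by (simp add: power_le_one)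
  define X where "X = (1-a^2)*b^2/6 + a^2*b^3 + a^2*b^2/3 + a^2*b/4"
  show ?thesis
  proof (cases "b \<le> 4/5")
    case True
    have "(1-b^2)*((1-c^2) + b*c^2 + c*p) = (1-b^2) + (1+b)*(((1-b)*c)*p - ((1-b)*c)^2)"
      by (simp add: power2_eq_square algebra_simps)
    also have "\<dots> \<le> (1-b^2) + (1+b)*(p^2/4)"
      using amgm4[of "(1-b)*c" p] b by (intro add_left_mono mult_left_mono) auto
    also have "\<dots> \<le> (1-b^2) + (1+b)*((a*(2*b+1/3))^2/4)"
    proof -
      have "p^2 \<le> (a*(2*b+1/3))^2" using p by (intro power_mono) (auto simp: algebra_simps)
      then show ?thesis using b by (intro add_left_mono mult_left_mono) auto
    qed
    finally have i: "(1-b^2)*((1-c^2) + b*c^2 + c*p) \<le> (1-b^2) + (1+b)*((a*(2*b+1/3))^2/4)" .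
    have "(1-a^2)*((1-b^2)*((1-c^2) + b*c^2 + c*p) + X) + 19*a^4/360
          \<le> (1-a^2)*((1-b^2) + (1+b)*((a*(2*b+1/3))^2/4) + X) + 19*a^4/360"
      using mult_left_mono[OF add_right_mono[OF i, of X] s1] by simp
    also have "\<dots> = TA (a^2) b"
      by (simp add: TA_def X_def power2_eq_square power3_eq_cube power4_eq_xxxx field_simps)
    also have "\<dots> \<le> 1" using a b True by (intro TA_le) (auto simp: power_le_one)
    finally show ?thesis by (simp add: X_def algebra_simps)
  next
    case False
    have "(1-c^2) + b*c^2 + c*p \<le> 1 + p"
    proof -
      have "b*c^2 \<le> c^2" using b c by (simp add: mult_left_le_one_le)
      moreover have "c*p \<le> p" using c p by (simp add: mult_left_le_one_le)
      ultimately show ?thesis by simp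
    qed
    also have "\<dots> \<le> 1 + a*(2*b+1/3)" using p by (simp add: algebra_simps)
    finally have i: "(1-b^2)*((1-c^2) + b*c^2 + c*p) \<le> (1-b^2)*(1 + a*(2*b+1/3))"
      using s2 by (intro mult_left_mono) auto
    have "(1-a^2)*((1-b^2)*((1-c^2) + b*c^2 + c*p) + X) + 19*a^4/360
          \<le> (1-a^2)*((1-b^2)*(1 + a*(2*b+1/3)) + X) + 19*a^4/360"
      using mult_left_mono[OF add_right_mono[OF i, of X] s1] by simp
    also have "\<dots> = TB a b"
      by (simp add: TB_def X_def power2_eq_square power3_eq_cube power4_eq_xxxx field_simps)
    also have "\<dots> \<le> 1" using a b False by (intro TB_le) auto
    finally show ?thesis by (simp add: X_def algebra_simps)
  qed
qed

lemma R3_le: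
  fixes a b c :: real
  assumes a: "0 \<le> a" "a \<le> 1" and b: "0 \<le> b" "b \<le> 1" and c: "0 \<le> c" "c \<le> 1"
  shows "(1-a^2)*((1-b^2)*c + a*b^2 + a*b/3) + a^3/12 \<le> 1"
proof -
  have s1: "0 \<le> 1 - a^2" using a by (simp add: power_le_one)
  have s2: "0 \<le> 1 - b^2" using b by (simp add: power_le_one)
  have "(1-b^2)*c \<le> 1-b^2" using s2 c by (simp add: mult_left_le)
  then have "(1-a^2)*((1-b^2)*c + a*b^2 + a*b/3) \<le> (1-a^2)*((1-b^2) + a*b^2 + a*b/3)"
    using s1 by (intro mult_left_mono) auto
  also have "\<dots> = (1-a^2) + (1+a)*(((1-a)*b)*(a/3) - ((1-a)*b)^2)"
    by (simp add: power2_eq_square algebra_simps)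
  also have "\<dots> \<le> (1-a^2) + (1+a)*((a/3)^2/4)"
    using amgm4[of "(1-a)*b" "a/3"] a by (intro add_left_mono mult_left_mono) auto
  finally have i: "(1-a^2)*((1-b^2)*c + a*b^2 + a*b/3) \<le> (1-a^2) + (1+a)*((a/3)^2/4)" .
  have "(1-a^2) + (1+a)*((a/3)^2/4) + a^3/12 = 1 - a^2 * (35/36 - a/9)"
    by (simp add: power2_eq_square power3_eq_cube field_simps)
  also have "\<dots> \<le> 1"
  proof -
    have "0 \<le> a^2 * (35/36 - a/9)" using a by (intro mult_nonneg_nonneg) auto
    then show ?thesis by linarith
  qed
  finally show ?thesis using i by linarith
qed

lemma R2_le:
  fixes a b :: real
  assumes a: "0 \<le> a" "a \<le> 1" and b: "0 \<le> b" "b \<le> 1"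
  shows "(1-a^2)*b + a^2/6 \<le> 1"
proof -
  have s1: "0 \<le> 1 - a^2" using a by (simp add: power_le_one)
  have "(1-a^2)*b \<le> 1-a^2" using s1 b by (simp add: mult_left_le)
  moreover have "0 \<le> a^2" by simp
  ultimately show ?thesis by linarith
qed

definition schur :: "(complex \<Rightarrow> complex) \<Rightarrow> bool" where
  "schur \<phi> \<longleftrightarrow> \<phi> holomorphic_on ball 0 1 \<and> (\<forall>z\<in>ball 0 1. norm (\<phi> z) \<le> 1)"

lemma mobius_identity:
  fixes u g :: complex
  shows "(cmod (1 - cnj g * u))^2 - (cmod (u - g))^2 = (1 - (cmod u)^2) * (1 - (cmod g)^2)"
  unfolding cmod_power2 by (simp add: power2_eq_square algebra_simps)

lemma mobius_lt1:
  fixes u g :: complex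
  assumes "cmod u < 1" "cmod g < 1"
  shows "cmod ((u - g) / (1 - cnj g * u)) < 1"
proof -
  have "0 < (1 - (cmod u)^2) * (1 - (cmod g)^2)"
    using assms by (intro mult_pos_pos) (auto simp: power_less_one_iff abs_square_less_1)
  then have "(cmod (u - g))^2 < (cmod (1 - cnj g * u))^2" using mobius_identity[of g u] by linarith
  then have lt: "cmod (u - g) < cmod (1 - cnj g * u)" by (rule power2_less_imp_less) simp
  then have "1 - cnj g * u \<noteq> 0" by auto
  then show ?thesis using lt by (simp add: norm_divide divide_less_eq)
qed

lemma schur_step:
  assumes "schur \<phi>"
  obtains \<psi> where "schur \<psi>" "\<And>z. z \<in> ball 0 1 \<Longrightarrow> \<phi> z * (1 + cnj (\<phi> 0) * z * \<psi> z) = \<phi> 0 + z * \<psi> z"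
proof -
  have ph: "\<phi> holomorphic_on ball 0 1" and pb: "\<And>z. z \<in> ball 0 1 \<Longrightarrow> norm (\<phi> z) \<le> 1"
    using assms by (auto simp: schur_def)
  define g where "g = \<phi> 0"
  have g1: "norm g \<le> 1" using pb[of 0] by (simp add: g_def)
  show ?thesis
  proof (cases "norm g = 1")
    case True
    have "\<phi> constant_on ball 0 1"
    proof (rule maximum_modulus_principle[where U="ball 0 1" and \<xi>=0, OF ph])
      show "norm (\<phi> z) \<le> norm (\<phi> 0)" if "z \<in> ball 0 1" for z
        using pb[OF that] True by (simp add: g_def)
    qed auto
    then obtain y where y: "\<And>z. z \<in> ball 0 1 \<Longrightarrow> \<phi> z = y" unfolding constant_on_def by blast
    have "y = g" using y[of 0] by (simp add: g_def)
    then have c: "\<And>z. z \<in> ball 0 1 \<Longrightarrow> \<phi> z = g" using y by simp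
    have "schur (\<lambda>_. 0)" by (simp add: schur_def)
    moreover have "\<phi> z * (1 + cnj (\<phi> 0) * z * 0) = \<phi> 0 + z * 0" if "z \<in> ball 0 1" for z
      using c[OF that] c[of 0] by simp
    ultimately show ?thesis using that[of "\<lambda>_. 0"] by blast
  next
    case False
    then have glt: "norm g < 1" using g1 by simp
    have plt: "norm (\<phi> z) < 1" if z: "z \<in> ball 0 1" for z
    proof (rule ccontr)
      assume "\<not> norm (\<phi> z) < 1"
      then have "norm (\<phi> z) = 1" using pb[OF z] by simp
      have "\<phi> constant_on ball 0 1"
      proof (rule maximum_modulus_principle[where U="ball 0 1" and \<xi>=z, OF ph])
        show "norm (\<phi> u) \<le> norm (\<phi> z)" if "u \<in> ball 0 1" for u
          using pb[OF that] \<open>norm (\<phi> z) = 1\<close> by simp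
      qed (use z in auto)
      then obtain y where y: "\<And>u. u \<in> ball 0 1 \<Longrightarrow> \<phi> u = y" unfolding constant_on_def by blast
      have "\<phi> 0 = \<phi> z" using y[of 0] y[OF z] by simp
      then show False using glt \<open>norm (\<phi> z) = 1\<close> by (simp add: g_def)
    qed
    have den: "1 - cnj g * \<phi> z \<noteq> 0" if z: "z \<in> ball 0 1" for z
    proof -
      have "norm g * norm (\<phi> z) < 1 * 1"
        using mult_strict_mono'[of "norm g" 1 "norm (\<phi> z)" 1] plt[OF z] glt by simp
      then have "norm (cnj g * \<phi> z) < 1" by (simp add: norm_mult)
      then show ?thesis by auto
    qed
    define M where "M z = (\<phi> z - g) / (1 - cnj g * \<phi> z)" for z
    have Mh: "M holomorphic_on ball 0 1" unfolding M_def[abs_def] using ph den by (auto intro!: holomorphic_intros)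
    have M0: "M 0 = 0" by (simp add: M_def g_def)
    have Mlt: "norm (M z) < 1" if "norm z < 1" for z
      unfolding M_def using mobius_lt1[OF plt glt] that by simp
    define \<psi> where "\<psi> = (\<lambda>z. if z = 0 then deriv M 0 else (M z - M 0) / (z - 0))"
    have psh: "\<psi> holomorphic_on ball 0 1" unfolding \<psi>_def by (rule pole_lemma[OF Mh]) auto
    have psb: "norm (\<psi> z) \<le> 1" if z: "z \<in> ball 0 1" for z
    proof (cases "z = 0")
      case True then show ?thesis using Schwarz_Lemma(2)[OF Mh M0 Mlt, of 0] by (simp add: \<psi>_def)
    next
      case False
      have "norm (M z) \<le> norm z" using Schwarz_Lemma(1)[OF Mh M0 Mlt, of z] z by simp
      then show ?thesis using False by (simp add: \<psi>_def M0 norm_divide divide_le_eq)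
    qed
    have "schur \<psi>" using psh psb by (simp add: schur_def)
    moreover have "\<phi> z * (1 + cnj (\<phi> 0) * z * \<psi> z) = \<phi> 0 + z * \<psi> z" if z: "z \<in> ball 0 1" for z
    proof (cases "z = 0")
      case True then show ?thesis by simp
    next
      case False
      then have "z * \<psi> z = M z" by (simp add: \<psi>_def M0)
      then have e: "z * \<psi> z * (1 - cnj g * \<phi> z) = \<phi> z - g" using den[OF z] by (simp add: M_def)
      have "\<phi> z * (1 + cnj g * z * \<psi> z) = \<phi> z + cnj g * (z * \<psi> z) * \<phi> z" by (simp add: algebra_simps)
      also have "\<dots> = g + z * \<psi> z"
      proof -
        have "\<phi> z + cnj g * (z * \<psi> z) * \<phi> z - (g + z * \<psi> z) = (\<phi> z - g) - z * \<psi> z * (1 - cnj g * \<phi> z)"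
          by (simp add: algebra_simps)
        then show ?thesis using e by simp
      qed
      finally show ?thesis by (simp add: g_def)
    qed
    ultimately show ?thesis using that by blast
  qed
qed

lemma w_schur:
  assumes wh: "w holomorphic_on ball 0 1" and w0: "w 0 = 0" and wb: "\<And>z. z \<in> ball 0 1 \<Longrightarrow> norm (w z) < 1"
  obtains \<phi> where "schur \<phi>" "\<And>z. z \<in> ball 0 1 \<Longrightarrow> w z = z * \<phi> z"
proof -
  define \<phi> where "\<phi> = (\<lambda>z. if z = 0 then deriv w 0 else (w z - w 0) / (z - 0))"
  have ph: "\<phi> holomorphic_on ball 0 1" unfolding \<phi>_def by (rule pole_lemma[OF wh]) auto
  have wlt: "norm (w z) < 1" if "norm z < 1" for z using wb that by simp
  have pb: "norm (\<phi> z) \<le> 1" if z: "z \<in> ball 0 1" for z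
  proof (cases "z = 0")
    case True then show ?thesis using Schwarz_Lemma(2)[OF wh w0 wlt, of 0] by (simp add: \<phi>_def)
  next
    case False
    have "norm (w z) \<le> norm z" using Schwarz_Lemma(1)[OF wh w0 wlt, of z] z by simp
    then show ?thesis using False by (simp add: \<phi>_def w0 norm_divide divide_le_eq)
  qed
  have "schur \<phi>" using ph pb by (simp add: schur_def)
  moreover have "w z = z * \<phi> z" if "z \<in> ball 0 1" for z
    by (cases "z = 0") (auto simp: \<phi>_def w0)
  ultimately show ?thesis using that by blast
qed

lemma schur_fps: "schur \<phi> \<Longrightarrow> \<phi> has_fps_expansion fps_expansion \<phi> 0"
  unfolding schur_def by (intro has_fps_expansion_fps_expansion[of "ball 0 1"]) auto

lemma schur_step_fps:
  assumes "schur \<phi>" "schur \<psi>"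
    and e: "\<And>z. z \<in> ball 0 1 \<Longrightarrow> \<phi> z * (1 + cnj (\<phi> 0) * z * \<psi> z) = \<phi> 0 + z * \<psi> z"
  shows "fps_expansion \<phi> 0 * (1 + fps_const (cnj (\<phi> 0)) * fps_X * fps_expansion \<psi> 0)
           = fps_const (\<phi> 0) + fps_X * fps_expansion \<psi> 0"
proof -
  have F1: "(\<lambda>z. \<phi> z * (1 + cnj (\<phi> 0) * z * \<psi> z)) has_fps_expansion
      fps_expansion \<phi> 0 * (1 + fps_const (cnj (\<phi> 0)) * fps_X * fps_expansion \<psi> 0)"
    by (intro fps_expansion_intros schur_fps assms)
  have F2: "(\<lambda>z. \<phi> 0 + z * \<psi> z) has_fps_expansion fps_const (\<phi> 0) + fps_X * fps_expansion \<psi> 0"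
    by (intro fps_expansion_intros schur_fps assms)
  have "eventually (\<lambda>z. \<phi> 0 + z * \<psi> z = \<phi> z * (1 + cnj (\<phi> 0) * z * \<psi> z)) (nhds 0)"
    using eventually_nhds_in_open[of "ball 0 1" 0] e by (auto elim: eventually_mono)
  then have F3: "(\<lambda>z. \<phi> z * (1 + cnj (\<phi> 0) * z * \<psi> z)) has_fps_expansion fps_const (\<phi> 0) + fps_X * fps_expansion \<psi> 0"
    using F2 has_fps_expansion_cong[of "\<lambda>z. \<phi> 0 + z * \<psi> z" "\<lambda>z. \<phi> z * (1 + cnj (\<phi> 0) * z * \<psi> z)"] by blast
  show ?thesis by (rule fps_expansion_unique[OF F1 F3])
qed

lemma step_coeffs:
  fixes P Q :: "complex fps"
  assumes "P * (1 + fps_const c * fps_X * Q) = fps_const g + fps_X * Q"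
  shows "P $ 0 = g" "P $ 1 = Q $ 0 - c*(P $ 0*Q $ 0)" "P $ 2 = Q $ 1 - c*(P $ 0*Q $ 1 + P $ 1*Q $ 0)"
        "P $ 3 = Q $ 2 - c*(P $ 0*Q $ 2 + P $ 1*Q $ 1 + P $ 2*Q $ 0)"
proof -
  have e: "P + fps_const c * (fps_X * (P * Q)) = fps_const g + fps_X * Q"
    using assms by (simp add: algebra_simps)
  have n: "P $ n + c * (if n = 0 then 0 else (P*Q) $ (n-1)) = (if n = 0 then g else 0) + (if n = 0 then 0 else Q $ (n-1))" for n
  proof -
    have "(P + fps_const c * (fps_X * (P * Q)))$n = (fps_const g + fps_X * Q)$n" using e by simp
    then show ?thesis by (cases n) auto
  qed
  show "P $ 0 = g" using n[of 0] by simp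
  show "P $ 1 = Q $ 0 - c*(P $ 0*Q $ 0)" using n[of 1] by (simp add: fps_mult_nth algebra_simps)
  show "P $ 2 = Q $ 1 - c*(P $ 0*Q $ 1 + P $ 1*Q $ 0)" using n[of 2] by (simp add: fps_mult_nth numeral_eq_Suc algebra_simps)
  show "P $ 3 = Q $ 2 - c*(P $ 0*Q $ 2 + P $ 1*Q $ 1 + P $ 2*Q $ 0)" using n[of 3] by (simp add: fps_mult_nth numeral_eq_Suc algebra_simps)
qed

lemma s_real: "1 - cnj g * g = complex_of_real (1 - (norm g)^2)"
  using complex_norm_square[of g] by (simp add: mult.commute)

lemma s_norm1: "norm g \<le> 1 \<Longrightarrow> norm (1 - cnj g * g) = 1 - (norm g)^2"
proof -
  assume "norm g \<le> 1"
  then have "norm (complex_of_real (1 - (norm g)^2)) = 1 - (norm g)^2"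
    by (simp only: norm_of_real) (simp add: abs_of_nonneg power_le_one)
  then show ?thesis by (simp only: s_real)
qed

lemma s_norm: "norm g \<le> 1 \<Longrightarrow> norm ((1 - cnj g * g) * x) = (1 - (norm g)^2) * norm x"
  by (simp only: norm_mult s_norm1)

lemma E1_bound: "norm (g1::complex) \<le> 1 \<Longrightarrow> norm g1 \<le> 1" by simp

lemma E2_bound:
  fixes g1 g2 :: complex
  assumes "norm g1 \<le> 1" "norm g2 \<le> 1"
  shows "norm ((1 - cnj g1 * g1) * g2 - g1^2/6) \<le> 1"
proof -
  have "norm ((1 - cnj g1 * g1) * g2 - g1^2/6) \<le> norm ((1 - cnj g1 * g1) * g2) + norm (g1^2/6)"
    by (rule norm_triangle_ineq4)
  also have "\<dots> = (1 - (norm g1)^2) * norm g2 + (norm g1)^2/6"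
    using assms by (simp add: s_norm norm_divide norm_power)
  also have "\<dots> \<le> 1" using assms by (intro R2_le) auto
  finally show ?thesis .
qed

lemma E3_bound:
  fixes g1 g2 g3 :: complex
  assumes "norm g1 \<le> 1" "norm g2 \<le> 1" "norm g3 \<le> 1"
  shows "norm ((1 - cnj g1 * g1) * ((1 - cnj g2 * g2) * g3 - cnj g1 * g2^2 - g1 * g2 / 3) + g1^3/12) \<le> 1"
proof -
  define a b c where "a = norm g1" "b = norm g2" "c = norm g3"
  have i: "norm ((1 - cnj g2 * g2) * g3 - cnj g1 * g2^2 - g1 * g2 / 3) \<le> (1 - b^2) * c + a * b^2 + a * b / 3"
  proof -
    have "norm ((1 - cnj g2 * g2) * g3 - cnj g1 * g2^2 - g1 * g2 / 3)
        \<le> norm ((1 - cnj g2 * g2) * g3) + norm (cnj g1 * g2^2) + norm (g1 * g2 / 3)"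
      by (rule order_trans[OF norm_triangle_ineq4 add_right_mono[OF norm_triangle_ineq4]])
    also have "\<dots> = (1 - b^2) * c + a * b^2 + a * b / 3"
      using assms by (simp add: a_b_c_def s_norm1 norm_mult norm_divide norm_power)
    finally show ?thesis .
  qed
  have "norm ((1 - cnj g1 * g1) * ((1 - cnj g2 * g2) * g3 - cnj g1 * g2^2 - g1 * g2 / 3) + g1^3/12)
      \<le> norm ((1 - cnj g1 * g1) * ((1 - cnj g2 * g2) * g3 - cnj g1 * g2^2 - g1 * g2 / 3)) + norm (g1^3/12)"
    by (rule norm_triangle_ineq)
  also have "\<dots> = (1 - a^2) * norm ((1 - cnj g2 * g2) * g3 - cnj g1 * g2^2 - g1 * g2 / 3) + a^3/12"
    using assms by (simp add: a_b_c_def s_norm norm_divide norm_power)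
  also have "\<dots> \<le> (1 - a^2) * ((1 - b^2) * c + a * b^2 + a * b / 3) + a^3/12"
    using i assms by (intro add_right_mono mult_left_mono) (auto simp: a_b_c_def power_le_one)
  also have "\<dots> \<le> 1" using assms by (intro R3_le) (auto simp: a_b_c_def)
  finally show ?thesis .
qed

lemma E4_bound:
  fixes g1 g2 g3 g4 :: complex
  assumes "norm g1 \<le> 1" "norm g2 \<le> 1" "norm g3 \<le> 1" "norm g4 \<le> 1"
  shows "norm ((1 - cnj g1*g1)*((1 - cnj g2*g2)*((1 - cnj g3*g3)*g4 - cnj g2*g3^2 - g3*(2*cnj g1*g2 + g1/3))
            - (1 - cnj g1*g1)*g2^2/6 + cnj g1^2*g2^3 + g1*cnj g1*g2^2/3 + g1^2*g2/4) - 19/360*g1^4) \<le> 1"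
proof -
  define a b c where "a = norm g1" "b = norm g2" "c = norm g3"
  define p where "p = norm (2*cnj g1*g2 + g1/3)"
  have p: "0 \<le> p" "p \<le> 2*a*b + a/3"
  proof -
    show "0 \<le> p" by (simp add: p_def)
    have "p \<le> norm (2*cnj g1*g2) + norm (g1/3)" unfolding p_def by (rule norm_triangle_ineq)
    also have "\<dots> = 2*a*b + a/3" by (simp add: a_b_c_def norm_mult norm_divide)
    finally show "p \<le> 2*a*b + a/3" .
  qed
  have i1: "norm ((1 - cnj g3*g3)*g4 - cnj g2*g3^2 - g3*(2*cnj g1*g2 + g1/3)) \<le> (1 - c^2) + b*c^2 + c*p"
  proof -
    have "norm ((1 - cnj g3*g3)*g4 - cnj g2*g3^2 - g3*(2*cnj g1*g2 + g1/3))
        \<le> norm ((1 - cnj g3*g3)*g4) + norm (cnj g2*g3^2) + norm (g3*(2*cnj g1*g2 + g1/3))"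
      by (rule order_trans[OF norm_triangle_ineq4 add_right_mono[OF norm_triangle_ineq4]])
    also have "\<dots> = (1 - c^2) * norm g4 + b*c^2 + c*p"
      using assms by (simp add: a_b_c_def p_def s_norm1 norm_mult norm_power)
    also have "\<dots> \<le> (1 - c^2) + b*c^2 + c*p"
    proof -
      have "(1 - c^2) * norm g4 \<le> (1 - c^2)" using assms by (intro mult_left_le) (auto simp: a_b_c_def power_le_one)
      then show ?thesis by simp
    qed
    finally show ?thesis .
  qed
  define I where "I = (1 - cnj g2*g2)*((1 - cnj g3*g3)*g4 - cnj g2*g3^2 - g3*(2*cnj g1*g2 + g1/3))
            - (1 - cnj g1*g1)*g2^2/6 + cnj g1^2*g2^3 + g1*cnj g1*g2^2/3 + g1^2*g2/4"
  have i2: "norm I \<le> (1-b^2)*((1-c^2) + b*c^2 + c*p) + (1-a^2)*b^2/6 + a^2*b^3 + a^2*b^2/3 + a^2*b/4"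
  proof -
    have "norm I \<le> norm ((1 - cnj g2*g2)*((1 - cnj g3*g3)*g4 - cnj g2*g3^2 - g3*(2*cnj g1*g2 + g1/3)))
        + norm ((1 - cnj g1*g1)*g2^2/6) + norm (cnj g1^2*g2^3) + norm (g1*cnj g1*g2^2/3) + norm (g1^2*g2/4)"
      unfolding I_def
      by (rule order_trans[OF norm_triangle_ineq add_right_mono[OF order_trans[OF norm_triangle_ineq
            add_right_mono[OF order_trans[OF norm_triangle_ineq add_right_mono[OF norm_triangle_ineq4]]]]]])
    also have "\<dots> = (1-b^2) * norm ((1 - cnj g3*g3)*g4 - cnj g2*g3^2 - g3*(2*cnj g1*g2 + g1/3))
        + (1-a^2)*b^2/6 + a^2*b^3 + a^2*b^2/3 + a^2*b/4"
    proof -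
      have "norm ((1 - cnj g1*g1)*g2^2/6) = (1-a^2)*b^2/6"
        using s_norm[of g1 "g2^2/6"] assms by (simp add: a_b_c_def norm_divide norm_power)
      then show ?thesis using assms by (simp add: a_b_c_def s_norm1 norm_mult norm_divide norm_power power2_eq_square)
    qed
    also have "\<dots> \<le> (1-b^2)*((1-c^2) + b*c^2 + c*p) + (1-a^2)*b^2/6 + a^2*b^3 + a^2*b^2/3 + a^2*b/4"
      using i1 assms by (intro add_right_mono mult_left_mono) (auto simp: a_b_c_def power_le_one)
    finally show ?thesis .
  qed
  have "norm ((1 - cnj g1*g1)*I - 19/360*g1^4) \<le> norm ((1 - cnj g1*g1)*I) + norm (19/360*g1^4)"
    by (rule norm_triangle_ineq4)
  also have "\<dots> = (1-a^2) * norm I + 19*a^4/360"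
    using assms by (simp add: a_b_c_def s_norm1 norm_mult norm_power)
  also have "\<dots> \<le> (1-a^2)*((1-b^2)*((1-c^2) + b*c^2 + c*p) + (1-a^2)*b^2/6 + a^2*b^3 + a^2*b^2/3 + a^2*b/4) + 19*a^4/360"
    using i2 assms by (intro add_right_mono mult_left_mono) (auto simp: a_b_c_def power_le_one)
  also have "\<dots> \<le> 1" using assms p by (intro R4_le) (auto simp: a_b_c_def)
  finally show ?thesis unfolding I_def .
qed

lemma compose_coeffs:
  fixes P :: "complex fps"
  shows "(PS oo (fps_X * P)) $ 1 = P $ 0 / 2"
        "(PS oo (fps_X * P)) $ 2 = P $ 1 / 2 - (P $ 0) ^ 2 / 12"
        "(PS oo (fps_X * P)) $ 3 = P $ 2 / 2 - P $ 0 * P $ 1 / 6 + (P $ 0) ^ 3 / 24"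
        "(PS oo (fps_X * P)) $ 4 = P $ 3 / 2 - (2 * P $ 0 * P $ 2 + (P $ 1) ^ 2) / 12 + (P $ 0) ^ 2 * P $ 1 / 8 - 19 * (P $ 0) ^ 4 / 720"
proof -
  have cn: "(PS oo (fps_X * P)) $ n = (\<Sum>i=0..n. PS $ i * (if n < i then 0 else (P ^ i) $ (n - i)))" for n
    by (simp add: fps_compose_nth power_mult_distrib fps_X_power_mult_nth)
  have s4: "(\<Sum>i::nat=0..4. f i) = f 0 + f 1 + f 2 + f 3 + (f 4 :: complex)" for f
    by (simp add: numeral_eq_Suc)
  have s3: "(\<Sum>i::nat=0..3. f i) = f 0 + f 1 + f 2 + (f 3 :: complex)" for f
    by (simp add: numeral_eq_Suc)
  have s2: "(\<Sum>i::nat=0..2. f i) = f 0 + f 1 + (f 2 :: complex)" for f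
    by (simp add: numeral_eq_Suc)
  have s1: "(\<Sum>i::nat=0..1. f i) = f 0 + (f 1 :: complex)" for f
    by simp
  have q20: "(P ^ 2) $ 0 = (P $ 0) ^ 2" by (simp add: fps_nth_power_0)
  have q21: "(P ^ 2) $ 1 = 2 * P $ 0 * P $ 1" by (simp add: power2_eq_square fps_mult_nth)
  have q22: "(P ^ 2) $ 2 = 2 * P $ 0 * P $ 2 + (P $ 1) ^ 2"
    by (simp add: power2_eq_square fps_mult_nth s2 algebra_simps)
  have q30: "(P ^ 3) $ 0 = (P $ 0) ^ 3" by (simp add: fps_nth_power_0)
  have q31: "(P ^ 3) $ 1 = 3 * (P $ 0) ^ 2 * P $ 1"
  proof -
    have "(P ^ 3) $ 1 = (P * P ^ 2) $ 1" by (simp add: power3_eq_cube power2_eq_square)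
    also have "\<dots> = P $ 0 * (P ^ 2) $ 1 + P $ 1 * (P ^ 2) $ 0" by (simp add: fps_mult_nth)
    finally show ?thesis using q21 q20 by (simp add: power2_eq_square algebra_simps)
  qed
  have q40: "(P ^ 4) $ 0 = (P $ 0) ^ 4" by (simp add: fps_nth_power_0)
  have q0: "(P ^ 0) $ k = (if k = 0 then 1 else 0)" for k by simp
  have q21': "(P ^ 2) $ Suc 0 = 2 * P $ 0 * P $ 1" using q21 by simp
  have q31': "(P ^ 3) $ Suc 0 = 3 * (P $ 0) ^ 2 * P $ 1" using q31 by simp
  have PS1: "PS $ Suc 0 = 1/2" using PS_coeffs(2) by simp
  note S = cn s1 s2 s3 s4 q20 q21 q22 q30 q31 q40 PS_coeffs
  show "(PS oo (fps_X * P)) $ 1 = P $ 0 / 2" by (simp add: cn s1 PS_coeffs PS1)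
  show "(PS oo (fps_X * P)) $ 2 = P $ 1 / 2 - (P $ 0) ^ 2 / 12"
    by (simp add: cn s2 q20 PS_coeffs PS1)
  show "(PS oo (fps_X * P)) $ 3 = P $ 2 / 2 - P $ 0 * P $ 1 / 6 + (P $ 0) ^ 3 / 24"
    by (simp add: cn s3 q21 q21' q30 PS_coeffs PS1)
  show "(PS oo (fps_X * P)) $ 4 = P $ 3 / 2 - (2 * P $ 0 * P $ 2 + (P $ 1) ^ 2) / 12 + (P $ 0) ^ 2 * P $ 1 / 8 - 19 * (P $ 0) ^ 4 / 720"
    by (simp add: cn s4 q22 q31 q31' q40 PS_coeffs PS1)
qed


lemma E4_poly:
  fixes d0 d1 d2 d3 g1 g2 g3 g4 h1 h2 s1 s2 s3 :: complex
  assumes "d0 = g1" "d1 = s1*g2" "d2 = s1* s2*g3 - h1* s1*g2^2"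
    "d3 = s1* s2* s3*g4 - s1* s2*h2*g3^2 - 2* s1* s2*h1*g2*g3 + s1*h1^2*g2^3"
  shows "d3 - d0*d2/3 - d1^2/6 + d0^2*d1/4 - 19/360*d0^4
     = s1*(s2*(s3*g4 - h2*g3^2 - g3*(2*h1*g2 + g1/3)) - s1*g2^2/6 + h1^2*g2^3 + g1*h1*g2^2/3 + g1^2*g2/4) - 19/360*g1^4"
  unfolding assms by (simp add: field_simps power2_eq_square power3_eq_cube power4_eq_xxxx)

lemma E3_poly:
  fixes d0 d1 d2 g1 g2 g3 h1 s1 s2 :: complex
  assumes "d0 = g1" "d1 = s1*g2" "d2 = s1* s2*g3 - h1* s1*g2^2"
  shows "d2 - d0*d1/3 + d0^3/12 = s1*(s2*g3 - h1*g2^2 - g1*g2/3) + g1^3/12"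
  unfolding assms by (simp add: field_simps power2_eq_square power3_eq_cube)

lemma E_alg:
  fixes P1 P2 P3 P4 :: "complex fps" and g1 g2 g3 g4 :: complex
  assumes r1: "P1 * (1 + fps_const (cnj g1) * fps_X * P2) = fps_const g1 + fps_X * P2"
      and r2: "P2 * (1 + fps_const (cnj g2) * fps_X * P3) = fps_const g2 + fps_X * P3"
      and r3: "P3 * (1 + fps_const (cnj g3) * fps_X * P4) = fps_const g3 + fps_X * P4"
      and r4: "P4 $ 0 = g4"
  shows "2 * (PS oo (fps_X * P1)) $ 1 = g1"
        "2 * (PS oo (fps_X * P1)) $ 2 = (1 - cnj g1 * g1) * g2 - g1^2/6"
        "2 * (PS oo (fps_X * P1)) $ 3 = (1 - cnj g1 * g1) * ((1 - cnj g2 * g2) * g3 - cnj g1 * g2^2 - g1 * g2 / 3) + g1^3/12"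
        "2 * (PS oo (fps_X * P1)) $ 4 = (1 - cnj g1*g1)*((1 - cnj g2*g2)*((1 - cnj g3*g3)*g4 - cnj g2*g3^2 - g3*(2*cnj g1*g2 + g1/3))
            - (1 - cnj g1*g1)*g2^2/6 + cnj g1^2*g2^3 + g1*cnj g1*g2^2/3 + g1^2*g2/4) - 19/360*g1^4"
proof -
  define s1 s2 s3 where "s1 = 1 - cnj g1 * g1" "s2 = 1 - cnj g2 * g2" "s3 = 1 - cnj g3 * g3"
  note a = step_coeffs[OF r1]
  note b = step_coeffs[OF r2]
  note c = step_coeffs[OF r3]
  have f0: "P3 $ 0 = g3" using c(1) .
  have f1: "P3 $ 1 = s3 * g4" using c(2)[unfolded r4 f0] by (simp add: s1_s2_s3_def algebra_simps)
  have e0: "P2 $ 0 = g2" using b(1) .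
  have e1: "P2 $ 1 = s2 * g3" using b(2)[unfolded f0 e0] by (simp add: s1_s2_s3_def algebra_simps)
  have e2: "P2 $ 2 = s2* s3*g4 - s2*cnj g2*g3^2" using b(3)[unfolded e0 e1 f0 f1]
    by (simp add: s1_s2_s3_def algebra_simps power2_eq_square)
  have d0: "P1 $ 0 = g1" using a(1) .
  have d1: "P1 $ 1 = s1 * g2" using a(2)[unfolded d0 e0] by (simp add: s1_s2_s3_def algebra_simps)
  have d2: "P1 $ 2 = s1* s2*g3 - cnj g1* s1*g2^2" using a(3)[unfolded d0 d1 e0 e1]
    by (simp add: s1_s2_s3_def algebra_simps power2_eq_square)
  have d3: "P1 $ 3 = s1* s2* s3*g4 - s1* s2*cnj g2*g3^2 - 2* s1* s2*cnj g1*g2*g3 + s1*(cnj g1)^2*g2^3"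
    using a(4)[unfolded d0 d1 d2 e0 e1 e2] by (simp add: s1_s2_s3_def algebra_simps power2_eq_square power3_eq_cube)
  show "2 * (PS oo (fps_X * P1)) $ 1 = g1"
    by (simp only: compose_coeffs d0) simp
  show "2 * (PS oo (fps_X * P1)) $ 2 = (1 - cnj g1 * g1) * g2 - g1^2/6"
    by (simp only: compose_coeffs d0 d1 s1_s2_s3_def) simp
  have "2 * (PS oo (fps_X * P1)) $ 3 = P1 $ 2 - P1 $ 0 * P1 $ 1 / 3 + (P1 $ 0)^3/12"
    by (simp only: compose_coeffs) (simp add: field_simps)
  also have "\<dots> = s1*(s2*g3 - cnj g1*g2^2 - g1*g2/3) + g1^3/12"
    by (rule E3_poly[OF d0 d1 d2])
  finally show "2 * (PS oo (fps_X * P1)) $ 3 = (1 - cnj g1 * g1) * ((1 - cnj g2 * g2) * g3 - cnj g1 * g2^2 - g1 * g2 / 3) + g1^3/12"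
    by (simp add: s1_s2_s3_def)
  have "2 * (PS oo (fps_X * P1)) $ 4 = P1 $ 3 - P1 $ 0 * P1 $ 2 / 3 - (P1 $ 1)^2/6 + (P1 $ 0)^2 * P1 $ 1 / 4 - 19/360*(P1 $ 0)^4"
    by (simp only: compose_coeffs) (simp add: field_simps)
  also have "\<dots> = s1*(s2*(s3*g4 - cnj g2*g3^2 - g3*(2*cnj g1*g2 + g1/3)) - s1*g2^2/6 + (cnj g1)^2*g2^3 + g1*cnj g1*g2^2/3 + g1^2*g2/4) - 19/360*g1^4"
    by (rule E4_poly[OF d0 d1 d2 d3])
  finally show "2 * (PS oo (fps_X * P1)) $ 4 = (1 - cnj g1*g1)*((1 - cnj g2*g2)*((1 - cnj g3*g3)*g4 - cnj g2*g3^2 - g3*(2*cnj g1*g2 + g1/3))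
            - (1 - cnj g1*g1)*g2^2/6 + cnj g1^2*g2^3 + g1*cnj g1*g2^2/3 + g1^2*g2/4) - 19/360*g1^4"
    by (simp add: s1_s2_s3_def)
qed

lemma schur_fps_0: "schur \<phi> \<Longrightarrow> fps_expansion \<phi> 0 $ 0 = \<phi> 0"
  using fps_nth_fps_expansion[OF schur_fps, of \<phi> 0] by simp

lemma schur_norm0: "schur \<phi> \<Longrightarrow> norm (\<phi> 0) \<le> 1"
  by (simp add: schur_def)

lemma upper_bound:
  assumes f: "f \<in> SG_star" and n: "n \<in> {1..4::nat}"
  shows "norm (log_coeff f n) \<le> 1 / (4 * real n)"
proof -
  have cS: "class_S f" and sub: "subordinate (starlike_quot f) Psi" using f by (auto simp: SG_star_def)
  obtain w where wh: "w holomorphic_on ball 0 1" and w0: "w 0 = 0"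
    and wq: "\<And>z. z \<in> ball 0 1 \<Longrightarrow> norm (w z) < 1 \<and> starlike_quot f z = Psi (w z)"
    using sub unfolding subordinate_def by blast
  obtain L where Lh: "L holomorphic_on ball 0 1" and L0: "L 0 = 0" and fe: "\<And>z. z \<in> ball 0 1 \<Longrightarrow> f z = z * exp (L z)"
    using log_exists[OF cS] by blast
  define W where "W = fps_expansion w 0"
  have Wexp: "w has_fps_expansion W" unfolding W_def using wh by (intro has_fps_expansion_fps_expansion[of "ball 0 1"]) auto
  have W0: "W $ 0 = 0" using fps_nth_fps_expansion[OF Wexp, of 0] w0 by simp
  have "(Psi \<circ> w) has_fps_expansion (PS oo W)" by (rule has_fps_expansion_compose[OF Psi_fps Wexp W0])
  moreover have "eventually (\<lambda>z. (Psi \<circ> w) z = starlike_quot f z) (nhds 0)"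
    using eventually_nhds_in_open[of "ball 0 1" 0] wq by (auto elim: eventually_mono)
  ultimately have Q: "starlike_quot f has_fps_expansion (PS oo W)"
    using has_fps_expansion_cong[of "Psi \<circ> w" "starlike_quot f"] by blast
  have n1: "n \<ge> 1" using n by simp
  have lc: "log_coeff f n = (PS oo W) $ n / (2 * of_nat n)" by (rule log_coeff_fps[OF Lh L0 fe Q n1])
  obtain \<phi>1 where s1: "schur \<phi>1" and we: "\<And>z. z \<in> ball 0 1 \<Longrightarrow> w z = z * \<phi>1 z"
    using w_schur[OF wh w0] wq by blast
  have "(\<lambda>z. z * \<phi>1 z) has_fps_expansion fps_X * fps_expansion \<phi>1 0"
    by (intro fps_expansion_intros schur_fps s1)
  moreover have "eventually (\<lambda>z. z * \<phi>1 z = w z) (nhds 0)"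
    using eventually_nhds_in_open[of "ball 0 1" 0] we by (auto elim: eventually_mono)
  ultimately have "w has_fps_expansion fps_X * fps_expansion \<phi>1 0"
    using has_fps_expansion_cong[of "\<lambda>z. z * \<phi>1 z" w] by blast
  then have WX: "W = fps_X * fps_expansion \<phi>1 0" by (rule fps_expansion_unique[OF Wexp])
  obtain \<phi>2 where s2: "schur \<phi>2" and e1: "\<And>z. z \<in> ball 0 1 \<Longrightarrow> \<phi>1 z * (1 + cnj (\<phi>1 0) * z * \<phi>2 z) = \<phi>1 0 + z * \<phi>2 z"
    using schur_step[OF s1] by blast
  obtain \<phi>3 where s3: "schur \<phi>3" and e2: "\<And>z. z \<in> ball 0 1 \<Longrightarrow> \<phi>2 z * (1 + cnj (\<phi>2 0) * z * \<phi>3 z) = \<phi>2 0 + z * \<phi>3 z"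
    using schur_step[OF s2] by blast
  obtain \<phi>4 where s4: "schur \<phi>4" and e3: "\<And>z. z \<in> ball 0 1 \<Longrightarrow> \<phi>3 z * (1 + cnj (\<phi>3 0) * z * \<phi>4 z) = \<phi>3 0 + z * \<phi>4 z"
    using schur_step[OF s3] by blast
  note EA = E_alg[OF schur_step_fps[OF s1 s2 e1] schur_step_fps[OF s2 s3 e2] schur_step_fps[OF s3 s4 e3] schur_fps_0[OF s4]]
  note N = schur_norm0[OF s1] schur_norm0[OF s2] schur_norm0[OF s3] schur_norm0[OF s4]
  define E where "E = 2 * (PS oo W) $ n"
  have lcE: "log_coeff f n = E / (4 * of_nat n)" using lc by (simp add: E_def)
  have "norm E \<le> 1"
  proof -
    consider "n = 1" | "n = 2" | "n = 3" | "n = 4" using n by force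
    then show ?thesis
    proof cases
      case 1 then show ?thesis using EA(1) N by (simp add: E_def WX)
    next
      case 2 then show ?thesis using EA(2) E2_bound[OF N(1,2)] by (simp add: E_def WX)
    next
      case 3 then show ?thesis using EA(3) E3_bound[OF N(1,2,3)] by (simp add: E_def WX)
    next
      case 4 then show ?thesis using EA(4) E4_bound[OF N] by (simp add: E_def WX)
    qed
  qed
  then show ?thesis using n1 by (simp add: lcE norm_divide divide_right_mono)
qed

lemma pow_in_ball': "z \<in> ball 0 1 \<Longrightarrow> n \<ge> 1 \<Longrightarrow> (z::complex) ^ n \<in> ball 0 1"
proof -
  assume "z \<in> ball 0 1" "n \<ge> 1"
  then have "norm z < 1" by simp
  obtain m where m: "n = Suc m" using \<open>n \<ge> 1\<close> by (cases n) auto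
  have "norm z ^ m \<le> 1" using \<open>norm z < 1\<close> by (intro power_le_one) auto
  then have "norm z * norm z ^ m \<le> norm z * 1" by (intro mult_left_mono) auto
  then have "norm z ^ n < 1" using \<open>norm z < 1\<close> m by simp
  then show ?thesis by (simp add: norm_power)
qed

lemma sharp_exists:
  fixes n :: nat assumes n: "n \<ge> 1"
  shows "\<exists>f\<in>SG_star. log_coeff f n = 1 / (4 * of_nat n)"
proof -
  define Q where "Q z = Psi (z ^ n)" for z
  have Qh: "Q holomorphic_on ball 0 1"
  proof -
    have "Psi \<circ> (\<lambda>z. z ^ n) holomorphic_on ball 0 1"
      by (rule holomorphic_on_compose_gen[OF _ Psi_holo]) (auto intro!: holomorphic_intros pow_in_ball'[OF _ n])
    then show ?thesis by (simp add: Q_def[abs_def] o_def)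
  qed
  have Q0: "Q 0 = 1" using n by (simp add: Q_def Psi_def)
  have ReQ: "Re (Q z) > 0" if "z \<in> ball 0 1" for z
    unfolding Q_def by (rule Re_Psi_pos[OF pow_in_ball'[OF that n]])
  define H where "H = (\<lambda>z. if z = 0 then deriv Q 0 else (Q z - Q 0) / (z - 0))"
  have Hh: "H holomorphic_on ball 0 1" unfolding H_def by (rule pole_lemma[OF Qh]) auto
  have zH: "z * H z = Q z - 1" for z
  proof (cases "z = 0")
    case True then show ?thesis by (simp add: H_def Q0)
  next
    case False then show ?thesis by (simp add: H_def Q0)
  qed
  obtain g where gd: "\<And>x. x \<in> ball 0 1 \<Longrightarrow> (g has_field_derivative H x) (at x within ball 0 1)"
    using holomorphic_convex_primitive'[OF convex_ball open_ball Hh] by blast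
  define L where "L z = g z - g 0" for z
  have Ld1: "(g has_field_derivative H x) (at x)" if x: "x \<in> ball 0 1" for x
  proof -
    have e: "at x within ball 0 1 = at x" by (rule at_within_open[OF x open_ball])
    show ?thesis using gd[OF x] unfolding e .
  qed
  have Ld: "(L has_field_derivative H x) (at x)" if x: "x \<in> ball 0 1" for x
  proof -
    have "((\<lambda>z. g z - g 0) has_field_derivative H x - 0) (at x)"
      by (rule DERIV_diff[OF Ld1[OF x] DERIV_const])
    then show ?thesis unfolding L_def by simp
  qed
  have Lh: "L holomorphic_on ball 0 1" unfolding holomorphic_on_open[OF open_ball] using Ld by blast
  have L0: "L 0 = 0" by (simp add: L_def)
  have dL: "deriv L z = H z" if "z \<in> ball 0 1" for z using Ld[OF that] by (rule DERIV_imp_deriv)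
  define f where "f z = z * exp (L z)" for z
  have fe: "\<And>z. z \<in> ball 0 1 \<Longrightarrow> f z = z * exp (L z)" by (simp add: f_def)
  have fh: "f holomorphic_on ball 0 1" unfolding f_def[abs_def] using Lh by (auto intro!: holomorphic_intros)
  have f0: "f 0 = 0" by (simp add: f_def)
  have df0: "deriv f 0 = 1"
  proof -
    have "(f has_field_derivative (1 * exp (L 0) + 0 * (exp (L 0) * H 0))) (at 0)"
      unfolding f_def[abs_def] using DERIV_mult[OF DERIV_ident DERIV_chain2[OF DERIV_exp Ld[of 0]]] by simp
    then show ?thesis using L0 by (simp add: DERIV_imp_deriv)
  qed
  define F where "F \<zeta> = \<zeta> + L (exp \<zeta>)" for \<zeta>
  define S where "S = {\<zeta>::complex. Re \<zeta> < 0}"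
  have expS: "exp \<zeta> \<in> ball 0 1" if "\<zeta> \<in> S" for \<zeta> using that by (simp add: S_def)
  have Fd: "(F has_field_derivative Q (exp \<zeta>)) (at \<zeta>)" if "\<zeta> \<in> S" for \<zeta>
  proof -
    have "(F has_field_derivative 1 + H (exp \<zeta>) * exp \<zeta>) (at \<zeta>)"
      unfolding F_def[abs_def] using DERIV_chain2[OF Ld[OF expS[OF that]] DERIV_exp]
      by (auto intro!: derivative_eq_intros)
    moreover have "1 + H (exp \<zeta>) * exp \<zeta> = Q (exp \<zeta>)" using zH[of "exp \<zeta>"] by (simp add: mult.commute)
    ultimately show ?thesis by simp
  qed
  have Finj: "\<zeta>1 = \<zeta>2" if "\<zeta>1 \<in> S" "\<zeta>2 \<in> S" "F \<zeta>1 = F \<zeta>2" for \<zeta>1 \<zeta>2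
  proof (rule ccontr)
    assume ne: "\<zeta>1 \<noteq> \<zeta>2"
    have "Re ((F \<zeta>2 - F \<zeta>1) / (\<zeta>2 - \<zeta>1)) > 0"
      by (rule NW_re_pos[of S F "\<lambda>\<zeta>. Q (exp \<zeta>)"])
         (use that ne Fd ReQ expS in \<open>auto simp: S_def convex_halfspace_Re_lt open_halfspace_Re_lt\<close>)
    then show False using that by simp
  qed
  have inj: "inj_on f (ball 0 1)"
  proof (rule inj_onI)
    fix z1 z2 assume z1: "z1 \<in> ball 0 1" and z2: "z2 \<in> ball 0 1" and eq: "f z1 = f z2"
    show "z1 = z2"
    proof (cases "z1 = 0 \<or> z2 = 0")
      case True then show ?thesis using eq by (auto simp: f_def)
    next
      case False
      then have nz: "z1 \<noteq> 0" "z2 \<noteq> 0" by auto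
      define a b where "a = Ln z1" "b = Ln z2"
      have ea: "exp a = z1" "exp b = z2" using nz by (simp_all add: a_b_def)
      have aS: "a \<in> S" "b \<in> S" using nz z1 z2 by (auto simp: a_b_def S_def ln_less_zero_iff ln_less_zero)
      have "exp (F a) = f z1" "exp (F b) = f z2" using ea by (simp_all add: F_def f_def exp_add)
      then have "exp (F a) = exp (F b)" using eq by simp
      then obtain k :: int where k: "F a = F b + of_int (2 * k) * pi * \<i>" using exp_eq by blast
      define c where "c = b + of_int (2 * k) * pi * \<i>"
      have "exp c = exp b" unfolding exp_eq c_def by blast
      then have ec: "exp c = z2" using ea(2) by simp
      have cS: "c \<in> S" using aS(2) by (simp add: c_def S_def)
      have "F c = F a" using k ec ea by (simp add: F_def c_def algebra_simps)
      then have "c = a" using Finj[OF cS aS(1)] by simp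
      then show ?thesis using ea ec by simp
    qed
  qed
  have cS: "class_S f" using fh inj f0 df0 by (simp add: class_S_def)
  have sq: "starlike_quot f z = Psi (z ^ n)" if z: "z \<in> ball 0 1" for z
  proof -
    have "starlike_quot f z = 1 + z * deriv L z" by (rule starlike_quot_eq[OF Lh fe z])
    also have "\<dots> = Q z" using zH[of z] dL[OF z] by simp
    finally show ?thesis by (simp add: Q_def)
  qed
  have "subordinate (starlike_quot f) Psi"
    unfolding subordinate_def
  proof (intro exI[of _ "\<lambda>z. z ^ n"] conjI ballI)
    show "(\<lambda>z. z ^ n) holomorphic_on ball 0 1" by (auto intro!: holomorphic_intros)
    show "0 ^ n = (0::complex)" using n by simp
    fix z :: complex assume z: "z \<in> ball 0 1"
    show "norm (z ^ n) < 1" using pow_in_ball'[OF z n] by simp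
    show "starlike_quot f z = Psi (z ^ n)" by (rule sq[OF z])
  qed
  then have fS: "f \<in> SG_star" using cS by (simp add: SG_star_def)
  have Xn: "(\<lambda>z. z ^ n) has_fps_expansion fps_X ^ n" by (intro fps_expansion_intros)
  have X0: "(fps_X ^ n :: complex fps) $ 0 = 0" using n by simp
  have "(Psi \<circ> (\<lambda>z. z ^ n)) has_fps_expansion (PS oo fps_X ^ n)"
    by (rule has_fps_expansion_compose[OF Psi_fps Xn X0])
  moreover have "eventually (\<lambda>z. (Psi \<circ> (\<lambda>z. z ^ n)) z = starlike_quot f z) (nhds 0)"
    using eventually_nhds_in_open[of "ball 0 1" 0] sq by (auto elim: eventually_mono)
  ultimately have Qf: "starlike_quot f has_fps_expansion (PS oo fps_X ^ n)"
    using has_fps_expansion_cong[of "Psi \<circ> (\<lambda>z. z ^ n)" "starlike_quot f"] by blast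
  have lc: "log_coeff f n = (PS oo fps_X ^ n) $ n / (2 * of_nat n)"
    by (rule log_coeff_fps[OF Lh L0 fe Qf n])
  have "(PS oo fps_X ^ n) $ n = (\<Sum>i=0..n. PS $ i * (if n = n * i then 1 else 0))"
    by (simp add: fps_compose_nth power_mult[symmetric])
  also have "\<dots> = (\<Sum>i=0..n. if i = 1 then PS $ i else 0)"
    using n by (intro sum.cong refl) auto
  also have "\<dots> = PS $ 1" using n by simp
  finally have h: "(PS oo fps_X ^ n) $ n = 1/2" using PS_coeffs(2) by simp
  have "log_coeff f n = 1 / (4 * of_nat n)" unfolding lc h by simp
  then show ?thesis using fS by blast
qed

theorem theorem3:
  shows "(\<forall>f\<in>SG_star. \<forall>n\<in>{1..4::nat}. norm (log_coeff f n) \<le> 1 / (4 * real n)) \<and>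
         (\<forall>n\<in>{1..4::nat}. \<exists>f\<in>SG_star. norm (log_coeff f n) = 1 / (4 * real n))"
proof
  show "\<forall>f\<in>SG_star. \<forall>n\<in>{1..4::nat}. norm (log_coeff f n) \<le> 1 / (4 * real n)"
    using upper_bound by blast
  show "\<forall>n\<in>{1..4::nat}. \<exists>f\<in>SG_star. norm (log_coeff f n) = 1 / (4 * real n)"
  proof
    fix n :: nat assume "n \<in> {1..4}"
    then have n: "n \<ge> 1" by simp
    obtain f where f: "f \<in> SG_star" and lc: "log_coeff f n = 1 / (4 * of_nat n)"
      using sharp_exists[OF n] by blast
    have "norm (log_coeff f n) = 1 / (4 * real n)"
      unfolding lc by (simp add: norm_divide)
    then show "\<exists>f\<in>SG_star. norm (log_coeff f n) = 1 / (4 * real n)" using f by blast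
  qed
qed

end
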